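(* Let $\Omega\subset\mathbb{R}^{d}$ be a variational parameter space and $\{q(\cdot|\boldsymbol{\lambda})\}_{\boldsymbol{\lambda}\in\Omega}$ a family of probability densities on the latent space. Let $f(\mathbf{z})=-\log \pi(D,\mathbf{z})$. For $\rho\in\mathcal{P}(\Omega)$ define the mixture $q_\rho(\mathbf{z})=\mathbb{E}_{\boldsymbol{\lambda}'\sim\rho}[q(\mathbf{z}|\boldsymbol{\lambda}')]$ and the functional $$\mathcal{L}(\rho)=\mathbb{E}_{\boldsymbol{\lambda}\sim\rho}\,\mathbb{E}_{\mathbf{z}\sim q(\cdot|\boldsymbol{\lambda})}\big[f(\mathbf{z})+\log q_\rho(\mathbf{z})\big].$$ Then the first variation of $\mathcal{L}$ at $\rho$ is $$\delta\mathcal{L}(\rho)(\boldsymbol{\lambda})=\mathbb{E}_{\mathbf{z}\sim q(\cdot|\boldsymbol{\lambda})}\Big[f(\mathbf{z})+\log\big(\mathbb{E}_{\boldsymbol{\lambda}'\sim\rho}[q(\mathbf{z}|\boldsymbol{\lambda}')]\big)\Big]+1 .$$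
   Context: $\pi(D,\mathbf{z})$ is the (unnormalized) joint density of observations $D$ and latent variable $\mathbf{z}$. $\mathcal{P}(\Omega)$ is the set of probability distributions on $\Omega$ (identified with their densities). The first variation $\delta\mathcal{L}(\rho):\Omega\to\mathbb{R}$ is the function such that for every $\chi\in\mathcal{P}(\Omega)$, $\lim_{\varepsilon\to 0}\frac{1}{\varepsilon}[\mathcal{L}(\rho+\varepsilon\chi)-\mathcal{L}(\rho)]=\int \chi(\boldsymbol{\lambda})\,\delta\mathcal{L}(\rho)(\boldsymbol{\lambda})\,d\boldsymbol{\lambda}$. *)

theory Defs
  imports "HOL-Analysis.Analysis"
begin

text \<open>Omega is a Borel subset of R^d (the euclidean space 'a); densities on Omega are
  taken w.r.t. Lebesgue measure. The latent space is a measure space M and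
  q z l = q(z|l) is a density w.r.t. M.\<close>

definition prob_density :: "'a::euclidean_space set \<Rightarrow> ('a \<Rightarrow> real) \<Rightarrow> bool" where
  "prob_density \<Omega> \<rho> \<longleftrightarrow> \<rho> \<in> borel_measurable lborel \<and> (\<forall>l\<in>\<Omega>. 0 \<le> \<rho> l)
     \<and> set_integrable lborel \<Omega> \<rho> \<and> (LINT l:\<Omega>|lborel. \<rho> l) = 1"

definition mixture :: "'a::euclidean_space set \<Rightarrow> ('z \<Rightarrow> 'a \<Rightarrow> real) \<Rightarrow> ('a \<Rightarrow> real) \<Rightarrow> 'z \<Rightarrow> real" where
  "mixture \<Omega> q \<rho> z = (LINT l:\<Omega>|lborel. \<rho> l * q z l)"

definition VI_L :: "'z measure \<Rightarrow> 'a::euclidean_space set \<Rightarrow> ('z \<Rightarrow> 'a \<Rightarrow> real) \<Rightarrow> ('z \<Rightarrow> real)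
    \<Rightarrow> ('a \<Rightarrow> real) \<Rightarrow> real" where
  "VI_L M \<Omega> q \<pi> \<rho> =
     (LINT l:\<Omega>|lborel. \<rho> l * (\<integral>z. q z l * (- ln (\<pi> z) + ln (mixture \<Omega> q \<rho> z)) \<partial>M))"

definition first_variation_at :: "'a::euclidean_space set \<Rightarrow> (('a \<Rightarrow> real) \<Rightarrow> real)
    \<Rightarrow> ('a \<Rightarrow> real) \<Rightarrow> ('a \<Rightarrow> real) \<Rightarrow> bool" where
  "first_variation_at \<Omega> Lf \<rho> g \<longleftrightarrow>
     (\<forall>\<psi>. prob_density \<Omega> \<psi> \<longrightarrow>
        ((\<lambda>\<epsilon>. (Lf (\<lambda>l. \<rho> l + \<epsilon> * \<psi> l) - Lf \<rho>) / \<epsilon>)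
           \<longlongrightarrow> (LINT l:\<Omega>|lborel. \<psi> l * g l)) (at_right 0))"

end

theory Submission
  imports Defs
begin

lemma ineq1:
  fixes P S Q e e0 a b c :: real
  assumes "0 \<le> P" "0 \<le> S" "0 \<le> Q" "0 < e" "e \<le> e0" "a \<le> c" "c \<le> b"
  shows "\<bar>(P + e*S) * Q * c\<bar> \<le> \<bar>P * Q * a\<bar> + e0 * \<bar>S * Q * a\<bar> + \<bar>(P + e0*S) * Q * b\<bar>"
proof -
  have K: "0 \<le> (P + e*S) * Q" "(P + e*S) * Q \<le> (P + e0*S) * Q"
    using assms by (auto intro!: mult_right_mono)
  have c: "\<bar>c\<bar> \<le> \<bar>a\<bar> + \<bar>b\<bar>" using assms by linarith
  have "\<bar>(P + e*S) * Q * c\<bar> = (P + e*S) * Q * \<bar>c\<bar>" using K by (metis abs_mult abs_of_nonneg)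
  also have "\<dots> \<le> (P + e0*S) * Q * (\<bar>a\<bar> + \<bar>b\<bar>)"
    by (rule mult_mono[OF K(2) c]) (use K in auto)
  also have "\<dots> = P*Q*\<bar>a\<bar> + e0*(S*Q*\<bar>a\<bar>) + (P + e0*S) * Q * \<bar>b\<bar>" by (simp add: algebra_simps)
  also have "\<dots> = \<bar>P * Q * a\<bar> + e0 * \<bar>S * Q * a\<bar> + \<bar>(P + e0*S) * Q * b\<bar>"
    using assms K by (simp add: abs_mult)
  finally show ?thesis .
qed

lemma phi_deriv:
  fixes m n A t :: real
  assumes "0 < m + t*n"
  shows "((\<lambda>s. (m + s*n) * (A + ln (m + s*n))) has_real_derivative n * (A + ln (m + t*n)) + n) (at t)"
  using assms by (auto intro!: derivative_eq_intros)

lemma quot_bound: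
  fixes m n A e e0 :: real
  assumes "0 < m" "0 \<le> n" "0 < e" "e \<le> e0"
  shows "\<bar>((m + e*n) * (A + ln (m + e*n)) - m * (A + ln m)) / e\<bar>
     \<le> \<bar>n * (A + ln m)\<bar> + \<bar>(m + e0*n) * (A + ln (m + e0*n))\<bar> / e0 + n"
proof -
  define \<phi> where "\<phi> t = (m + t*n) * (A + ln (m + t*n))" for t
  have "\<exists>\<xi>. 0 < \<xi> \<and> \<xi> < e \<and> \<phi> e - \<phi> 0 = (e - 0) * (n * (A + ln (m + \<xi>*n)) + n)"
  proof (rule MVT2[OF assms(3), of \<phi> "\<lambda>x. n * (A + ln (m + x*n)) + n"])
    fix x assume "0 \<le> x" "x \<le> e"
    then have "0 < m + x*n" using assms by (simp add: add_pos_nonneg)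
    then show "(\<phi> has_real_derivative n * (A + ln (m + x*n)) + n) (at x)"
      unfolding \<phi>_def[abs_def] by (rule phi_deriv)
  qed
  then obtain \<xi> where xi: "0 < \<xi>" "\<xi> < e" "\<phi> e - \<phi> 0 = e * (n * (A + ln (m + \<xi>*n)) + n)" by auto
  have p1: "0 < m + \<xi>*n" using assms xi by (simp add: add_pos_nonneg)
  have l1: "ln m \<le> ln (m + \<xi>*n)" using assms xi p1 by simp
  have "m + \<xi>*n \<le> m + e0*n" using assms xi by (simp add: mult_right_mono)
  then have l2: "ln (m + \<xi>*n) \<le> ln (m + e0*n)" using p1 by simp
  have c: "\<bar>A + ln (m + \<xi>*n)\<bar> \<le> \<bar>A + ln m\<bar> + \<bar>A + ln (m + e0*n)\<bar>" using l1 l2 by linarith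
  have e0: "0 < e0" using assms by simp
  have ne: "n \<le> (m + e0*n) / e0" using assms e0 by (simp add: le_divide_eq)
  have pe0: "0 < m + e0*n" using assms e0 by (simp add: add_pos_nonneg)
  have "\<bar>(\<phi> e - \<phi> 0) / e\<bar> = \<bar>n * (A + ln (m + \<xi>*n)) + n\<bar>" using xi assms by simp
  also have "\<dots> \<le> n * \<bar>A + ln (m + \<xi>*n)\<bar> + n"
  proof -
    have "\<bar>n * (A + ln (m + \<xi>*n)) + n\<bar> \<le> \<bar>n * (A + ln (m + \<xi>*n))\<bar> + \<bar>n\<bar>" by (rule abs_triangle_ineq)
    then show ?thesis using assms(2) by (simp add: abs_mult)
  qed
  also have "\<dots> \<le> n * (\<bar>A + ln m\<bar> + \<bar>A + ln (m + e0*n)\<bar>) + n"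
    by (intro add_right_mono mult_left_mono c assms(2))
  also have "\<dots> = n * \<bar>A + ln m\<bar> + n * \<bar>A + ln (m + e0*n)\<bar> + n" by (simp add: algebra_simps)
  also have "\<dots> \<le> n * \<bar>A + ln m\<bar> + (m + e0*n) / e0 * \<bar>A + ln (m + e0*n)\<bar> + n"
    by (intro add_right_mono add_left_mono mult_right_mono ne abs_ge_zero)
  also have "\<dots> = \<bar>n * (A + ln m)\<bar> + \<bar>(m + e0*n) * (A + ln (m + e0*n))\<bar> / e0 + n"
  proof -
    have "\<bar>n * (A + ln m)\<bar> = n * \<bar>A + ln m\<bar>" using assms(2) by (simp add: abs_mult)
    moreover have "\<bar>(m + e0*n) * (A + ln (m + e0*n))\<bar> / e0 = (m + e0*n) / e0 * \<bar>A + ln (m + e0*n)\<bar>"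
      unfolding abs_mult abs_of_pos[OF pe0] by simp
    ultimately show ?thesis by linarith
  qed
  finally have calc: "\<bar>(\<phi> e - \<phi> 0) / e\<bar> \<le> \<bar>n * (A + ln m)\<bar> + \<bar>(m + e0*n) * (A + ln (m + e0*n))\<bar> / e0 + n" .
  have eq: "((m + e*n) * (A + ln (m + e*n)) - m * (A + ln m)) / e = (\<phi> e - \<phi> 0) / e" by (simp add: \<phi>_def)
  show ?thesis unfolding eq using calc .
qed


lemma quot_lim:
  fixes m n A :: real
  assumes "0 < m"
  shows "((\<lambda>e. ((m + e*n) * (A + ln (m + e*n)) - m * (A + ln m)) / e) \<longlongrightarrow> n * (A + ln m) + n) (at_right 0)"
proof -
  have "((\<lambda>s. (m + s*n) * (A + ln (m + s*n))) has_real_derivative n * (A + ln (m + 0*n)) + n) (at 0)"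
    by (rule phi_deriv) (use assms in simp)
  then have "((\<lambda>s. (m + s*n) * (A + ln (m + s*n))) has_real_derivative n * (A + ln (m + 0*n)) + n) (at 0 within {0<..})"
    by (rule has_field_derivative_at_within)
  then have "((\<lambda>y. ((m + y*n) * (A + ln (m + y*n)) - (m + 0*n) * (A + ln (m + 0*n))) / (y - 0)) \<longlongrightarrow> n * (A + ln (m + 0*n)) + n) (at_right 0)"
    unfolding has_field_derivative_iff .
  then show ?thesis by (simp only: diff_zero mult_zero_left add_0_right)
qed

lemma mixture_meas:
  assumes "\<Omega> \<in> sets lborel"
    and "(\<lambda>(z, l). q z l) \<in> borel_measurable (M \<Otimes>\<^sub>M lborel)"
    and "r \<in> borel_measurable lborel"
  shows "mixture \<Omega> q r \<in> borel_measurable M"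
proof -
  have m: "(\<lambda>(z, l). indicator \<Omega> l *\<^sub>R (r l * q z l)) \<in> borel_measurable (M \<Otimes>\<^sub>M lborel)"
    using assms by measurable
  have "(\<lambda>z. \<integral>l. indicator \<Omega> l *\<^sub>R (r l * q z l) \<partial>lborel) \<in> borel_measurable M"
    by (rule sigma_finite_measure.borel_measurable_lebesgue_integral[OF sigma_finite_lborel m])
  then show ?thesis unfolding mixture_def[abs_def] set_lebesgue_integral_def .
qed

lemma fub:
  fixes M :: "'z measure" and \<Omega> :: "'a::euclidean_space set"
  assumes sM: "sigma_finite_measure M"
    and int: "integrable (M \<Otimes>\<^sub>M lborel) (\<lambda>(z, l). indicator \<Omega> l * r l * q z l * B z)"
    and si: "\<forall>z\<in>space M. set_integrable lborel \<Omega> (\<lambda>l. r l * q z l)"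
  shows "(LINT l:\<Omega>|lborel. r l * (\<integral>z. q z l * B z \<partial>M)) = (\<integral>z. mixture \<Omega> q r z * B z \<partial>M)"
    and "integrable M (\<lambda>z. mixture \<Omega> q r z * B z)"
    and "set_integrable lborel \<Omega> (\<lambda>l. r l * (\<integral>z. q z l * B z \<partial>M))"
proof -
  interpret sM: sigma_finite_measure M by (rule sM)
  interpret P: pair_sigma_finite M lborel
    by (intro pair_sigma_finite.intro sM sigma_finite_lborel)
  define f where "f z l = indicator \<Omega> l * r l * q z l * B z" for z l
  have intf: "integrable (M \<Otimes>\<^sub>M lborel) (\<lambda>(z, l). f z l)" using int unfolding f_def .
  have e1: "indicator \<Omega> l *\<^sub>R (r l * (\<integral>z. q z l * B z \<partial>M)) = (\<integral>z. f z l \<partial>M)" for l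
    unfolding f_def by (simp add: mult.assoc)
  have e2: "(\<integral>l. f z l \<partial>lborel) = mixture \<Omega> q r z * B z" if "z \<in> space M" for z
  proof -
    have "(\<integral>l. f z l \<partial>lborel) = (\<integral>l. indicator \<Omega> l *\<^sub>R (r l * q z l) * B z \<partial>lborel)"
      unfolding f_def by (simp add: mult.assoc)
    also have "\<dots> = (\<integral>l. indicator \<Omega> l *\<^sub>R (r l * q z l) \<partial>lborel) * B z"
      by (rule integral_mult_left_zero)
    finally show ?thesis unfolding mixture_def set_lebesgue_integral_def .
  qed
  have "(LINT l:\<Omega>|lborel. r l * (\<integral>z. q z l * B z \<partial>M)) = (\<integral>l. (\<integral>z. f z l \<partial>M) \<partial>lborel)"
    unfolding set_lebesgue_integral_def e1 ..
  also have "\<dots> = (\<integral>z. (\<integral>l. f z l \<partial>lborel) \<partial>M)"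
    by (rule P.Fubini_integral[OF intf])
  also have "\<dots> = (\<integral>z. mixture \<Omega> q r z * B z \<partial>M)"
    by (rule Bochner_Integration.integral_cong[OF refl e2])
  finally show "(LINT l:\<Omega>|lborel. r l * (\<integral>z. q z l * B z \<partial>M)) = (\<integral>z. mixture \<Omega> q r z * B z \<partial>M)" .
  show "integrable M (\<lambda>z. mixture \<Omega> q r z * B z)"
  proof (rule Bochner_Integration.integrable_cong[THEN iffD1, OF refl _ P.integrable_fst[OF intf]])
    fix z assume "z \<in> space M"
    then show "(\<integral>l. f z l \<partial>lborel) = mixture \<Omega> q r z * B z" by (rule e2)
  qed
  show "set_integrable lborel \<Omega> (\<lambda>l. r l * (\<integral>z. q z l * B z \<partial>M))"
    unfolding set_integrable_def e1 by (rule P.integrable_snd[OF intf])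
qed

theorem theorem1:
  fixes M :: "'z measure" and \<Omega> :: "'a::euclidean_space set"
    and q :: "'z \<Rightarrow> 'a \<Rightarrow> real" and \<pi> :: "'z \<Rightarrow> real" and \<rho> :: "'a \<Rightarrow> real"
  assumes "sigma_finite_measure M"
    and "\<Omega> \<in> sets lborel"
    and "(\<lambda>(z, l). q z l) \<in> borel_measurable (M \<Otimes>\<^sub>M lborel)"
    and "\<forall>z\<in>space M. \<forall>l\<in>\<Omega>. 0 \<le> q z l"
    and "\<forall>l\<in>\<Omega>. integrable M (\<lambda>z. q z l) \<and> (\<integral>z. q z l \<partial>M) = 1"
    and "\<pi> \<in> borel_measurable M"
    and "\<forall>z\<in>space M. 0 < \<pi> z"
    and "prob_density \<Omega> \<rho>"
    and "\<forall>z\<in>space M. set_integrable lborel \<Omega> (\<lambda>l. \<rho> l * q z l)"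
    and "\<forall>z\<in>space M. 0 < mixture \<Omega> q \<rho> z"
    and "integrable (M \<Otimes>\<^sub>M lborel)
           (\<lambda>(z, l). indicator \<Omega> l * \<rho> l * q z l * (- ln (\<pi> z) + ln (mixture \<Omega> q \<rho> z)))"
    and "\<And>\<psi>. prob_density \<Omega> \<psi> \<Longrightarrow>
           (\<forall>z\<in>space M. set_integrable lborel \<Omega> (\<lambda>l. \<psi> l * q z l))
         \<and> integrable (M \<Otimes>\<^sub>M lborel)
             (\<lambda>(z, l). indicator \<Omega> l * \<psi> l * q z l * (- ln (\<pi> z) + ln (mixture \<Omega> q \<rho> z)))
         \<and> (\<exists>\<epsilon>0>0. integrable (M \<Otimes>\<^sub>M lborel)
             (\<lambda>(z, l). indicator \<Omega> l * (\<rho> l + \<epsilon>0 * \<psi> l) * q z l *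
                (- ln (\<pi> z) + ln (mixture \<Omega> q (\<lambda>l'. \<rho> l' + \<epsilon>0 * \<psi> l') z))))"
  shows "first_variation_at \<Omega> (VI_L M \<Omega> q \<pi>) \<rho>
           (\<lambda>l. (\<integral>z. q z l * (- ln (\<pi> z) + ln (mixture \<Omega> q \<rho> z)) \<partial>M) + 1)"
proof -
  note sM = assms(1) and OmS = assms(2) and qm = assms(3) and qnn = assms(4) and qint = assms(5)
    and pim = assms(6) and pipos = assms(7) and rhod = assms(8) and rsi = assms(9) and mpos0 = assms(10)
    and int00 = assms(11) and psi_ass = assms(12)
  interpret sM: sigma_finite_measure M by (rule sM)
  interpret P: pair_sigma_finite M lborel
    by (intro pair_sigma_finite.intro sM sigma_finite_lborel)
  have rhom: "\<rho> \<in> borel_measurable lborel" and rhonn: "\<forall>l\<in>\<Omega>. 0 \<le> \<rho> l"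
    using rhod unfolding prob_density_def by auto
  have rhob[measurable]: "\<rho> \<in> borel_measurable borel" using rhom by simp
  define A where "A z = - ln (\<pi> z)" for z
  define m where "m = mixture \<Omega> q \<rho>"
  have mm[measurable]: "m \<in> borel_measurable M"
    unfolding m_def by (rule mixture_meas[OF OmS qm rhom])
  have Am[measurable]: "A \<in> borel_measurable M" unfolding A_def[abs_def] using pim by (intro borel_measurable_uminus borel_measurable_ln)
  have mpos: "\<And>z. z \<in> space M \<Longrightarrow> 0 < m z" using mpos0 unfolding m_def by auto
  have L0: "VI_L M \<Omega> q \<pi> \<rho> = (\<integral>z. m z * (A z + ln (m z)) \<partial>M)"
    and L0i: "integrable M (\<lambda>z. m z * (A z + ln (m z)))"
    using fub[OF sM int00 rsi] unfolding VI_L_def m_def[symmetric] A_def by auto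
  show ?thesis unfolding first_variation_at_def
  proof (intro allI impI)
    fix \<psi> assume psid: "prob_density \<Omega> \<psi>"
    have psim[measurable]: "\<psi> \<in> borel_measurable lborel" and psinn: "\<forall>l\<in>\<Omega>. 0 \<le> \<psi> l"
      and psisi: "set_integrable lborel \<Omega> \<psi>" and psi1: "(LINT l:\<Omega>|lborel. \<psi> l) = 1"
      using psid unfolding prob_density_def by auto
    have psib[measurable]: "\<psi> \<in> borel_measurable borel" using psim by simp
    obtain e0 where e0: "e0 > 0" and si\<psi>: "\<forall>z\<in>space M. set_integrable lborel \<Omega> (\<lambda>l. \<psi> l * q z l)"
      and int\<psi>: "integrable (M \<Otimes>\<^sub>M lborel) (\<lambda>(z,l). indicator \<Omega> l * \<psi> l * q z l * (- ln (\<pi> z) + ln (mixture \<Omega> q \<rho> z)))"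
      and inte0: "integrable (M \<Otimes>\<^sub>M lborel) (\<lambda>(z,l). indicator \<Omega> l * (\<rho> l + e0 * \<psi> l) * q z l * (- ln (\<pi> z) + ln (mixture \<Omega> q (\<lambda>l'. \<rho> l' + e0 * \<psi> l') z)))"
      using psi_ass[OF psid] by blast
    define n where "n = mixture \<Omega> q \<psi>"
    define me where "me e = mixture \<Omega> q (\<lambda>l. \<rho> l + e * \<psi> l)" for e
    have nm[measurable]: "n \<in> borel_measurable M"
      unfolding n_def by (rule mixture_meas[OF OmS qm psim])
    have mem[measurable]: "me e \<in> borel_measurable M" for e
      unfolding me_def by (rule mixture_meas[OF OmS qm]) (intro borel_measurable_add borel_measurable_times rhom psim borel_measurable_const)
    have si_e: "\<forall>z\<in>space M. set_integrable lborel \<Omega> (\<lambda>l. (\<rho> l + e * \<psi> l) * q z l)" for e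
    proof
      fix z assume z: "z \<in> space M"
      have "set_integrable lborel \<Omega> (\<lambda>l. \<rho> l * q z l + e * (\<psi> l * q z l))"
        using rsi si\<psi> z by (intro set_integral_add(1) set_integrable_mult_right) auto
      then show "set_integrable lborel \<Omega> (\<lambda>l. (\<rho> l + e * \<psi> l) * q z l)"
        by (simp add: algebra_simps)
    qed
    have me_eq: "me e z = m z + e * n z" if z: "z \<in> space M" for e z
    proof -
      have "me e z = (LINT l:\<Omega>|lborel. \<rho> l * q z l + e * (\<psi> l * q z l))"
        unfolding me_def mixture_def by (simp add: algebra_simps)
      also have "\<dots> = m z + e * n z"
        using rsi si\<psi> z unfolding m_def n_def mixture_def
        by (subst set_integral_add(2)) auto
      finally show ?thesis .
    qed
    have nnn: "0 \<le> n z" if z: "z \<in> space M" for z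
      unfolding n_def mixture_def set_lebesgue_integral_def
      using qnn psinn z by (intro Bochner_Integration.integral_nonneg) (auto simp: indicator_def)
    have psiq_int: "integrable (M \<Otimes>\<^sub>M lborel) (\<lambda>(z, l). indicator \<Omega> l * \<psi> l * q z l * 1)"
    proof (rule integrableI_nonneg)
      show "(\<lambda>(z, l). indicator \<Omega> l * \<psi> l * q z l * 1) \<in> borel_measurable (M \<Otimes>\<^sub>M lborel)"
        using qm OmS by measurable
      show "AE x in M \<Otimes>\<^sub>M lborel. 0 \<le> (case x of (z, l) \<Rightarrow> indicator \<Omega> l * \<psi> l * q z l * 1)"
        using qnn psinn by (intro AE_I2) (auto simp: space_pair_measure indicator_def)
      have meas2: "(\<lambda>x. ennreal (case x of (z, l) \<Rightarrow> indicator \<Omega> l * \<psi> l * q z l * 1)) \<in> borel_measurable (M \<Otimes>\<^sub>M lborel)"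
        using qm OmS by measurable
      have inner: "(\<integral>\<^sup>+z. ennreal (indicator \<Omega> l * \<psi> l * q z l * 1) \<partial>M) = ennreal (indicator \<Omega> l * \<psi> l)" for l
      proof (cases "l \<in> \<Omega>")
        case True
        have "(\<integral>\<^sup>+z. ennreal (indicator \<Omega> l * \<psi> l * q z l * 1) \<partial>M) = (\<integral>\<^sup>+z. ennreal (\<psi> l * q z l) \<partial>M)"
          using True by simp
        also have "\<dots> = ennreal (\<integral>z. \<psi> l * q z l \<partial>M)"
          using True qint qnn psinn by (intro nn_integral_eq_integral) (auto intro!: AE_I2)
        also have "\<dots> = ennreal (indicator \<Omega> l * \<psi> l)" using True qint by simp
        finally show ?thesis .
      qed simp
      have "(\<integral>\<^sup>+x. ennreal (case x of (z, l) \<Rightarrow> indicator \<Omega> l * \<psi> l * q z l * 1) \<partial>(M \<Otimes>\<^sub>M lborel))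
          = (\<integral>\<^sup>+l. (\<integral>\<^sup>+z. ennreal (indicator \<Omega> l * \<psi> l * q z l * 1) \<partial>M) \<partial>lborel)"
        using P.nn_integral_snd[OF meas2] by simp
      also have "\<dots> = (\<integral>\<^sup>+l. ennreal (indicator \<Omega> l * \<psi> l) \<partial>lborel)"
        unfolding inner ..
      also have "\<dots> = ennreal (\<integral>l. indicator \<Omega> l * \<psi> l \<partial>lborel)"
        using psisi psinn unfolding set_integrable_def
        by (intro nn_integral_eq_integral) (auto intro!: AE_I2 simp: indicator_def)
      also have "\<dots> = 1" using psi1 unfolding set_lebesgue_integral_def by simp
      finally show "(\<integral>\<^sup>+x. ennreal (case x of (z, l) \<Rightarrow> indicator \<Omega> l * \<psi> l * q z l * 1) \<partial>(M \<Otimes>\<^sub>M lborel)) < \<infinity>"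
        by simp
    qed
    note fn1 = fub[OF sM psiq_int si\<psi>, folded n_def]
    have nint: "integrable M n" using fn1(2) by simp
    have "(LINT l:\<Omega>|lborel. \<psi> l * (\<integral>z. q z l * 1 \<partial>M)) = (LINT l:\<Omega>|lborel. \<psi> l)"
      by (rule set_lebesgue_integral_cong[OF OmS]) (use qint in auto)
    then have nint1: "(\<integral>z. n z \<partial>M) = 1" using fn1(1) psi1 by simp
    have Bform: "- ln (\<pi> z) + ln (mixture \<Omega> q (\<lambda>l'. \<rho> l' + e * \<psi> l') z) = A z + ln (m z + e * n z)"
      if z: "z \<in> space M" for z e
      using me_eq[OF z, of e] unfolding me_def A_def by simp
    have Mform: "mixture \<Omega> q (\<lambda>l'. \<rho> l' + e * \<psi> l') z = m z + e * n z"
      if z: "z \<in> space M" for z e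
      using me_eq[OF z, of e] unfolding me_def by simp
    define W where "W = (\<lambda>(z, l). \<bar>indicator \<Omega> l * \<rho> l * q z l * (- ln (\<pi> z) + ln (mixture \<Omega> q \<rho> z))\<bar>
       + e0 * \<bar>indicator \<Omega> l * \<psi> l * q z l * (- ln (\<pi> z) + ln (mixture \<Omega> q \<rho> z))\<bar>
       + \<bar>indicator \<Omega> l * (\<rho> l + e0 * \<psi> l) * q z l * (- ln (\<pi> z) + ln (mixture \<Omega> q (\<lambda>l'. \<rho> l' + e0 * \<psi> l') z))\<bar>)"
    have Wint: "integrable (M \<Otimes>\<^sub>M lborel) W"
    proof -
      have "integrable (M \<Otimes>\<^sub>M lborel) (\<lambda>x. \<bar>(case x of (z, l) \<Rightarrow> indicator \<Omega> l * \<rho> l * q z l * (- ln (\<pi> z) + ln (mixture \<Omega> q \<rho> z)))\<bar>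
       + e0 * \<bar>(case x of (z, l) \<Rightarrow> indicator \<Omega> l * \<psi> l * q z l * (- ln (\<pi> z) + ln (mixture \<Omega> q \<rho> z)))\<bar>
       + \<bar>(case x of (z, l) \<Rightarrow> indicator \<Omega> l * (\<rho> l + e0 * \<psi> l) * q z l * (- ln (\<pi> z) + ln (mixture \<Omega> q (\<lambda>l'. \<rho> l' + e0 * \<psi> l') z)))\<bar>)"
        by (rule Bochner_Integration.integrable_add[OF Bochner_Integration.integrable_add[OF integrable_abs[OF int00] integrable_mult_right[OF integrable_abs[OF int\<psi>]]] integrable_abs[OF inte0]])
      then show ?thesis unfolding W_def by (simp add: case_prod_beta')
    qed
    have intH: "integrable (M \<Otimes>\<^sub>M lborel) (\<lambda>(z, l). indicator \<Omega> l * (\<rho> l + e * \<psi> l) * q z l *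
        (- ln (\<pi> z) + ln (mixture \<Omega> q (\<lambda>l'. \<rho> l' + e * \<psi> l') z)))" if e: "0 < e" "e \<le> e0" for e
    proof (rule Bochner_Integration.integrable_bound[OF Wint])
      show "(\<lambda>(z, l). indicator \<Omega> l * (\<rho> l + e * \<psi> l) * q z l *
        (- ln (\<pi> z) + ln (mixture \<Omega> q (\<lambda>l'. \<rho> l' + e * \<psi> l') z))) \<in> borel_measurable (M \<Otimes>\<^sub>M lborel)"
        unfolding me_def[symmetric] using qm OmS pim by measurable
      show "AE x in M \<Otimes>\<^sub>M lborel. norm (case x of (z, l) \<Rightarrow> indicator \<Omega> l * (\<rho> l + e * \<psi> l) * q z l *
        (- ln (\<pi> z) + ln (mixture \<Omega> q (\<lambda>l'. \<rho> l' + e * \<psi> l') z))) \<le> norm (W x)"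
      proof (rule AE_I2)
        fix x :: "'z \<times> 'a" assume "x \<in> space (M \<Otimes>\<^sub>M lborel)"
        then obtain z l where x: "x = (z, l)" and z: "z \<in> space M" by (auto simp: space_pair_measure)
        have mz: "0 < m z" and nz: "0 \<le> n z" using mpos nnn z by auto
        have p1: "0 < m z + e * n z" using mz nz e by (simp add: add_pos_nonneg)
        have ac: "A z + ln (m z) \<le> A z + ln (m z + e * n z)" using mz nz e p1 by simp
        have "m z + e * n z \<le> m z + e0 * n z" using nz e by (simp add: mult_right_mono)
        then have cb: "A z + ln (m z + e * n z) \<le> A z + ln (m z + e0 * n z)" using p1 by simp
        have W0: "0 \<le> W x" unfolding W_def x using e by simp
        have "norm (case x of (z, l) \<Rightarrow> indicator \<Omega> l * (\<rho> l + e * \<psi> l) * q z l *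
          (- ln (\<pi> z) + ln (mixture \<Omega> q (\<lambda>l'. \<rho> l' + e * \<psi> l') z))) \<le> W x"
        proof (cases "l \<in> \<Omega>")
          case True
          have "\<bar>(\<rho> l + e * \<psi> l) * q z l * (A z + ln (m z + e * n z))\<bar>
            \<le> \<bar>\<rho> l * q z l * (A z + ln (m z))\<bar> + e0 * \<bar>\<psi> l * q z l * (A z + ln (m z))\<bar>
               + \<bar>(\<rho> l + e0 * \<psi> l) * q z l * (A z + ln (m z + e0 * n z))\<bar>"
            using rhonn psinn qnn z True e ac cb by (intro ineq1) auto
          then show ?thesis using True z
            unfolding W_def x by (simp add: Mform[OF z] m_def[symmetric] A_def)
        next
          case False
          then show ?thesis using W0 unfolding x by simp
        qed
        then show "norm (case x of (z, l) \<Rightarrow> indicator \<Omega> l * (\<rho> l + e * \<psi> l) * q z l *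
          (- ln (\<pi> z) + ln (mixture \<Omega> q (\<lambda>l'. \<rho> l' + e * \<psi> l') z))) \<le> norm (W x)"
          by (rule order_trans) simp
      qed
    qed
    have Le: "VI_L M \<Omega> q \<pi> (\<lambda>l. \<rho> l + e * \<psi> l) = (\<integral>z. (m z + e * n z) * (A z + ln (m z + e * n z)) \<partial>M)"
      and Lei: "integrable M (\<lambda>z. (m z + e * n z) * (A z + ln (m z + e * n z)))"
      if e: "0 < e" "e \<le> e0" for e
    proof -
      note F = fub[OF sM intH[OF e] si_e[of e]]
      have eqz: "mixture \<Omega> q (\<lambda>l. \<rho> l + e * \<psi> l) z * (- ln (\<pi> z) + ln (mixture \<Omega> q (\<lambda>l'. \<rho> l' + e * \<psi> l') z))
          = (m z + e * n z) * (A z + ln (m z + e * n z))" if z: "z \<in> space M" for z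
        using Bform[OF z, of e] Mform[OF z, of e] by simp
      show "VI_L M \<Omega> q \<pi> (\<lambda>l. \<rho> l + e * \<psi> l) = (\<integral>z. (m z + e * n z) * (A z + ln (m z + e * n z)) \<partial>M)"
        unfolding VI_L_def F(1) by (rule Bochner_Integration.integral_cong[OF refl eqz])
      show "integrable M (\<lambda>z. (m z + e * n z) * (A z + ln (m z + e * n z)))"
        using F(2) by (rule Bochner_Integration.integrable_cong[THEN iffD1, OF refl eqz, rotated])
    qed
    define D where "D e z = ((m z + e * n z) * (A z + ln (m z + e * n z)) - m z * (A z + ln (m z))) / e" for e z
    have Dm[measurable]: "D e \<in> borel_measurable M" for e
      unfolding D_def[abs_def] by measurable
    have quot: "(VI_L M \<Omega> q \<pi> (\<lambda>l. \<rho> l + e * \<psi> l) - VI_L M \<Omega> q \<pi> \<rho>) / e = (\<integral>z. D e z \<partial>M)"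
      if e: "0 < e" "e \<le> e0" for e
      unfolding Le[OF e] L0 D_def
      by (simp add: Bochner_Integration.integral_diff[OF Lei[OF e] L0i, symmetric])
    note fpsi = fub[OF sM int\<psi> si\<psi>, folded m_def n_def]
    have Tval: "(LINT l:\<Omega>|lborel. \<psi> l * ((\<integral>z. q z l * (- ln (\<pi> z) + ln (mixture \<Omega> q \<rho> z)) \<partial>M) + 1))
        = (\<integral>z. n z * (A z + ln (m z)) + n z \<partial>M)"
    proof -
      have "(LINT l:\<Omega>|lborel. \<psi> l * ((\<integral>z. q z l * (- ln (\<pi> z) + ln (mixture \<Omega> q \<rho> z)) \<partial>M) + 1))
        = (LINT l:\<Omega>|lborel. \<psi> l * (\<integral>z. q z l * (- ln (\<pi> z) + ln (m z)) \<partial>M) + \<psi> l)"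
        unfolding m_def by (simp add: distrib_left)
      also have "\<dots> = (LINT l:\<Omega>|lborel. \<psi> l * (\<integral>z. q z l * (- ln (\<pi> z) + ln (m z)) \<partial>M)) + (LINT l:\<Omega>|lborel. \<psi> l)"
        using fpsi(3) psisi by (rule set_integral_add(2))
      also have "\<dots> = (\<integral>z. n z * (A z + ln (m z)) \<partial>M) + (\<integral>z. n z \<partial>M)"
        unfolding fpsi(1) psi1 nint1 A_def ..
      also have "\<dots> = (\<integral>z. n z * (A z + ln (m z)) + n z \<partial>M)"
        using fpsi(2) nint unfolding A_def by (rule Bochner_Integration.integral_add[symmetric])
      finally show ?thesis .
    qed
    have fint: "integrable M (\<lambda>z. n z * (A z + ln (m z)))" using fpsi(2) unfolding A_def .
    define w where "w z = \<bar>n z * (A z + ln (m z))\<bar> + \<bar>(m z + e0 * n z) * (A z + ln (m z + e0 * n z))\<bar> / e0 + n z" for z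
    have wint: "integrable M w"
      unfolding w_def using fint Lei[OF e0 order.refl] nint
      by (intro Bochner_Integration.integrable_add integrable_abs integrable_divide_zero) auto
    have lim: "((\<lambda>e. \<integral>z. D e z \<partial>M) \<longlongrightarrow> (\<integral>z. n z * (A z + ln (m z)) + n z \<partial>M)) (at_right 0)"
      unfolding filterlim_at_right_to_top
    proof (rule integral_dominated_convergence_at_top[where w = w])
      show "(\<lambda>z. n z * (A z + ln (m z)) + n z) \<in> borel_measurable M" by measurable
      show "D (inverse t) \<in> borel_measurable M" for t by measurable
      show "integrable M w" by (rule wint)
      show "AE z in M. ((\<lambda>t. D (inverse t) z) \<longlongrightarrow> n z * (A z + ln (m z)) + n z) at_top"
      proof (rule AE_I2)
        fix z assume z: "z \<in> space M"
        have "((\<lambda>e. D e z) \<longlongrightarrow> n z * (A z + ln (m z)) + n z) (at_right 0)"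
          unfolding D_def by (rule quot_lim[OF mpos[OF z]])
        then show "((\<lambda>t. D (inverse t) z) \<longlongrightarrow> n z * (A z + ln (m z)) + n z) at_top"
          unfolding filterlim_at_right_to_top .
      qed
      show "\<forall>\<^sub>F t in at_top. AE z in M. norm (D (inverse t) z) \<le> w z"
        unfolding eventually_at_top_linorder
      proof (intro exI allI impI)
        fix t :: real assume t: "1 / e0 \<le> t"
        have tpos: "0 < t" using t e0 by (meson less_le_trans zero_less_divide_1_iff)
        have ip: "0 < inverse t" using tpos by simp
        have ile: "inverse t \<le> e0"
          using le_imp_inverse_le[OF t] e0 by simp
        show "AE z in M. norm (D (inverse t) z) \<le> w z"
        proof (rule AE_I2)
          fix z assume z: "z \<in> space M"
          show "norm (D (inverse t) z) \<le> w z"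
            unfolding D_def w_def real_norm_def using quot_bound[OF mpos[OF z] nnn[OF z] ip ile] .
        qed
      qed
    qed
    have ev: "\<forall>\<^sub>F e in at_right 0. (VI_L M \<Omega> q \<pi> (\<lambda>l. \<rho> l + e * \<psi> l) - VI_L M \<Omega> q \<pi> \<rho>) / e = (\<integral>z. D e z \<partial>M)"
      unfolding eventually_at_right_field using e0 quot by (intro exI[of _ e0]) auto
    show "((\<lambda>\<epsilon>. (VI_L M \<Omega> q \<pi> (\<lambda>l. \<rho> l + \<epsilon> * \<psi> l) - VI_L M \<Omega> q \<pi> \<rho>) / \<epsilon>) \<longlongrightarrow>
       (LINT l:\<Omega>|lborel. \<psi> l * ((\<integral>z. q z l * (- ln (\<pi> z) + ln (mixture \<Omega> q \<rho> z)) \<partial>M) + 1))) (at_right 0)"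
      unfolding Tval tendsto_cong[OF ev] by (rule lim)
  qed
qed

end
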